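(* Let $d\ge1$, $\nu>0$, $\mu>0$, and let $N$ be a random variable with $\Pr\{N=n\}=c_n^{(\nu,\mu)}$, $n=0,1,\dots$. Then $\sum_{n=0}^\infty c_n^{(\nu,\mu)}=1$; if $\nu,\mu>1$ then \[ EN=\frac d2\left(\frac{B(\nu-1,\mu-1)}{B(\nu,\mu)}-1\right); \] and if $\nu,\mu>2$ then \[ \operatorname{Var}(N)=\frac d4\left((d+2)\frac{B(\nu-2,\mu-2)}{B(\nu,\mu)}-2\frac{B(\nu-1,\mu-1)}{B(\nu,\mu)}-d\frac{B^2(\nu-1,\mu-1)}{B^2(\nu,\mu)}\right). \]
   Context: $c_n^{(\nu,\mu)}=\frac{1}{B(\nu,\mu)}\frac{(\frac d2)_n}{n!}\int_0^1 t^{\mu+\frac d2-1}(1-t)^{\nu+\frac d2-1}(1-t+t^2)^n\,dt$, where $B$ is the Beta function and $(a)_n=a(a+1)\cdots(a+n-1)$. *)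

theory Defs
  imports "HOL-Analysis.Analysis"
begin

definition coef :: "nat \<Rightarrow> real \<Rightarrow> real \<Rightarrow> nat \<Rightarrow> real" where
  "coef d \<nu> \<mu> n =
     1 / Beta \<nu> \<mu> * (pochhammer (real d / 2) n / fact n) *
     integral {0..1} (\<lambda>t::real. t powr (\<mu> + real d / 2 - 1) *
                                 (1 - t) powr (\<nu> + real d / 2 - 1) *
                                 (1 - t + t\<^sup>2) ^ n)"

end

theory Submission
  imports Defs
begin

lemma pointwise_series:
  fixes b x :: real assumes "0 \<le> x" "x < 1"
  shows "(\<lambda>n. pochhammer b n / fact n * x^n) sums (1 - x) powr (-b)"
proof -
  have "(\<lambda>n. ((-b) gchoose n) * (-x)^n) sums (1 + (-x)) powr (-b)"
    by (rule gen_binomial_real) (use assms in auto)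
  moreover have "((-b) gchoose n) * (-x)^n = pochhammer b n / fact n * x^n" for n
  proof -
    have "((-1::real)^n * (-1)^n) = 1"
      by (metis power_mult_distrib mult_minus1 minus_minus power_one)
    then show ?thesis
      by (simp add: gbinomial_pochhammer power_minus[of x n] algebra_simps)
  qed
  ultimately show ?thesis by simp
qed

lemma series_integral:
  fixes b I :: real and g G :: "real \<Rightarrow> real"
  assumes b: "b > 0" and gnn: "\<And>t. t \<in> {0<..<1} \<Longrightarrow> g t \<ge> 0"
    and gc: "continuous_on {0<..<1} g"
    and GI: "(G has_integral I) {0..1}"
    and Geq: "\<And>t. t \<in> {0<..<1} \<Longrightarrow> G t = g t * (t*(1-t)) powr (-b)"
  shows "(\<lambda>n. pochhammer b n / fact n * integral {0..1} (\<lambda>t. g t * (1-t+t^2)^n)) sums I"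
proof -
  define U where "U = {0<..<(1::real)}"
  define f where "f n t = pochhammer b n / fact n * (g t * (1-t+t^2)^n)" for n t
  have xs: "0 \<le> 1-t+t^2" "1-t+t^2 < 1" "1 - (1-t+t^2) = t*(1-t)" if "t \<in> U" for t :: real
  proof -
    from that have t: "0 < t" "t < 1" by (auto simp: U_def)
    have "1-t+t^2 = (t-1/2)^2 + 3/4" by (simp add: power2_eq_square algebra_simps)
    also have "\<dots> \<ge> 0" by (intro add_nonneg_nonneg) auto
    finally show "0 \<le> 1-t+t^2" .
    show "1-t+t^2 < 1" using t by (simp add: power2_eq_square mult_less_cancel_right1 )
    show "1 - (1-t+t^2) = t*(1-t)" by (simp add: power2_eq_square algebra_simps)
  qed
  have ser: "(\<lambda>n. f n t) sums G t" if "t \<in> U" for t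
  proof -
    have "(\<lambda>n. g t * (pochhammer b n / fact n * (1-t+t^2)^n)) sums (g t * (1 - (1-t+t^2)) powr (-b))"
      by (intro sums_mult pointwise_series xs that)
    then show ?thesis using Geq[of t] that xs(3)[OF that]
      by (simp add: f_def U_def mult_ac)
  qed
  have fnn: "0 \<le> f n t" if "t \<in> U" for n t
    unfolding f_def using gnn[of t] that xs[OF that] b
    by (intro mult_nonneg_nonneg divide_nonneg_nonneg pochhammer_pos[THEN less_imp_le])
       (auto simp: U_def)
  define S where "S N t = (\<Sum>n<N. f n t)" for N t
  have Sle: "S N t \<le> G t" if "t \<in> U" for N t
  proof -
    have "S N t \<le> (\<Sum>n. f n t)" unfolding S_def
      by (rule sum_le_suminf) (use ser[OF that] fnn[OF that] in \<open>auto simp: sums_iff\<close>)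
    also have "\<dots> = G t" using ser[OF that] by (simp add: sums_iff)
    finally show ?thesis .
  qed
  have Snn: "0 \<le> S N t" if "t \<in> U" for N t
    unfolding S_def using fnn[OF that] by (intro sum_nonneg) auto
  have fle: "f n t \<le> G t" if "t \<in> U" for n t
  proof -
    have "f n t \<le> S (Suc n) t" unfolding S_def using fnn[OF that]
      by (simp add: Snn[OF that, unfolded S_def])
    then show ?thesis using Sle[OF that, of "Suc n"] by linarith
  qed
  have Uleb: "U \<in> sets lebesgue" by (simp add: U_def)
  have Gint: "G integrable_on U"
    using GI unfolding U_def by (simp add: has_integral_Icc_iff_Ioo integrable_on_def) blast
  have fint: "f n integrable_on U" for n
  proof (rule measurable_bounded_by_integrable_imp_integrable[OF _ Gint _ Uleb])
    show "f n \<in> borel_measurable (lebesgue_on U)" unfolding f_def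
      by (intro continuous_imp_measurable_on_sets_lebesgue Uleb continuous_intros)
         (use gc in \<open>simp add: U_def\<close>)
    show "norm (f n t) \<le> G t" if "t \<in> U" for t
      using fnn[OF that] fle[OF that] by simp
  qed
  have Sint: "S N integrable_on U" for N
    unfolding S_def by (intro integrable_sum fint) auto
  have "(\<lambda>N. integral U (S N)) \<longlonglongrightarrow> integral U G"
    by (rule dominated_convergence(2)[OF Sint Gint])
       (use Snn Sle ser in \<open>auto simp: sums_def S_def\<close>)
  moreover have "integral U G = I"
    using GI unfolding U_def by (simp add: has_integral_Icc_iff_Ioo integral_unique)
  moreover have "integral U (S N) = (\<Sum>n<N. pochhammer b n / fact n * integral {0..1} (\<lambda>t. g t * (1-t+t^2)^n))" for N
  proof -
    have "integral U (S N) = (\<Sum>n<N. integral U (f n))"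
      unfolding S_def by (rule Henstock_Kurzweil_Integration.integral_sum) (auto intro: fint)
    also have "\<dots> = (\<Sum>n<N. pochhammer b n / fact n * integral {0..1} (\<lambda>t. g t * (1-t+t^2)^n))"
      unfolding f_def U_def by (simp add: integral_open_interval_real)
    finally show ?thesis .
  qed
  ultimately show ?thesis by (simp add: sums_def)
qed


lemma powr_shift:
  fixes t p q c e1 e2 :: real
  assumes "0 < t" "t < 1" "p + c = e1" "q + c = e2"
  shows "t powr e1 * (1-t) powr e2 * (t*(1-t)) powr (-c) = t powr p * (1-t) powr q"
proof -
  have "(t*(1-t)) powr (-c) = t powr (-c) * (1-t) powr (-c)"
    using assms by (simp add: powr_mult)
  moreover have "t powr e1 * t powr (-c) = t powr p"
    using assms by (simp flip: powr_add add: assms(3)[symmetric])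
  moreover have "(1-t) powr e2 * (1-t) powr (-c) = (1-t) powr q"
    using assms by (simp flip: powr_add add: assms(4)[symmetric])
  ultimately show ?thesis by (simp add: mult_ac)
qed

lemma powr_plus1: "0 < (t::real) \<Longrightarrow> e = f + 1 \<Longrightarrow> t powr e = t powr f * t"
  by (simp add: powr_add)

lemma powr_plus2: "0 < (t::real) \<Longrightarrow> e = f + 2 \<Longrightarrow> t powr e = t powr f * t^2"
  by (simp add: powr_add powr_numeral)

lemma Beta_pos_real: "0 < x \<Longrightarrow> 0 < y \<Longrightarrow> 0 < Beta x (y::real)"
  by (simp add: Beta_def)

lemma cont_g0: "continuous_on {0<..<1} (\<lambda>t::real. t powr p * (1-t) powr q)"
  by (intro continuous_intros) auto

lemma part1:
  fixes d :: nat and \<nu> \<mu> :: real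
  assumes "d \<ge> 1" "\<nu> > 0" and "\<mu> > 0"
  shows "coef d \<nu> \<mu> sums 1"
proof -
  define a where "a = real d / 2"
  have a: "a > 0" using assms(1) by (simp add: a_def)
  define B where "B = Beta \<nu> \<mu>"
  have B: "B > 0" unfolding B_def using assms by (intro Beta_pos_real)
  have "(\<lambda>n. pochhammer a n / fact n * integral {0..1}
      (\<lambda>t. (t powr (\<mu>+a-1) * (1-t) powr (\<nu>+a-1)) * (1-t+t^2)^n)) sums Beta \<mu> \<nu>"
  proof (rule series_integral[where G = "\<lambda>t. t powr (\<mu>-1) * (1-t) powr (\<nu>-1)"])
    show "((\<lambda>t. t powr (\<mu>-1) * (1-t) powr (\<nu>-1)) has_integral Beta \<mu> \<nu>) {0..1}"
      using assms by (intro has_integral_Beta_real) auto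
    show "continuous_on {0<..<1} (\<lambda>t::real. t powr (\<mu>+a-1) * (1-t) powr (\<nu>+a-1))"
      by (rule cont_g0)
    fix t :: real assume t: "t \<in> {0<..<1}"
    then show "0 \<le> t powr (\<mu>+a-1) * (1-t) powr (\<nu>+a-1)" by simp
    show "t powr (\<mu>-1) * (1-t) powr (\<nu>-1) = t powr (\<mu>+a-1) * (1-t) powr (\<nu>+a-1) * (t*(1-t)) powr (-a)"
      using t by (subst powr_shift) auto
  qed (rule a)
  then have "(\<lambda>n. 1 / B * (pochhammer a n / fact n * integral {0..1}
      (\<lambda>t. (t powr (\<mu>+a-1) * (1-t) powr (\<nu>+a-1)) * (1-t+t^2)^n))) sums (1 / B * Beta \<mu> \<nu>)"
    by (rule sums_mult)
  moreover have "1 / B * Beta \<mu> \<nu> = 1" using B by (simp add: B_def Beta_commute)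
  ultimately show ?thesis
    unfolding coef_def a_def B_def by (simp add: mult_ac)
qed

lemma part2:
  fixes d :: nat and \<nu> \<mu> :: real
  assumes "d \<ge> 1" "\<nu> > 1" and "\<mu> > 1"
  shows "(\<lambda>n. real n * coef d \<nu> \<mu> n) sums
             (real d / 2 * (Beta (\<nu> - 1) (\<mu> - 1) / Beta \<nu> \<mu> - 1))"
proof -
  define a where "a = real d / 2"
  have a: "a > 0" using assms(1) by (simp add: a_def)
  define B where "B = Beta \<nu> \<mu>"
  have B: "B > 0" unfolding B_def using assms by (intro Beta_pos_real) auto
  define g0 where "g0 t = t powr (\<mu>+a-1) * (1-t) powr (\<nu>+a-1)" for t :: real
  have "(\<lambda>n. pochhammer (a+1) n / fact n * integral {0..1}
      (\<lambda>t. (g0 t * (1-t+t^2)) * (1-t+t^2)^n)) sums (Beta (\<mu>-1) (\<nu>-1) - Beta \<mu> \<nu>)"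
  proof (rule series_integral[where G = "\<lambda>t. t powr (\<mu>-1-1) * (1-t) powr (\<nu>-1-1) - t powr (\<mu>-1) * (1-t) powr (\<nu>-1)"])
    show "((\<lambda>t. t powr (\<mu>-1-1) * (1-t) powr (\<nu>-1-1) - t powr (\<mu>-1) * (1-t) powr (\<nu>-1))
            has_integral (Beta (\<mu>-1) (\<nu>-1) - Beta \<mu> \<nu>)) {0..1}"
      using assms by (intro has_integral_diff has_integral_Beta_real) auto
    show "continuous_on {0<..<1} (\<lambda>t::real. g0 t * (1-t+t^2))"
      unfolding g0_def by (intro continuous_intros cont_g0)
    fix t :: real assume t: "t \<in> {0<..<1}"
    have x: "0 \<le> 1-t+t^2"
    proof -
      have "1-t+t^2 = (t-1/2)^2 + 3/4" by (simp add: power2_eq_square algebra_simps)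
      also have "\<dots> \<ge> 0" by (intro add_nonneg_nonneg) auto
      finally show ?thesis .
    qed
    then show "0 \<le> g0 t * (1-t+t^2)" using t by (simp add: g0_def)
    have e: "g0 t * (t*(1-t)) powr (-(a+1)) = t powr (\<mu>-1-1) * (1-t) powr (\<nu>-1-1)"
      unfolding g0_def using t by (subst powr_shift) auto
    have e1: "t powr (\<mu>-1) = t powr (\<mu>-1-1) * t" using t by (intro powr_plus1) auto
    have e2: "(1-t) powr (\<nu>-1) = (1-t) powr (\<nu>-1-1) * (1-t)" using t by (intro powr_plus1) auto
    show "t powr (\<mu>-1-1) * (1-t) powr (\<nu>-1-1) - t powr (\<mu>-1) * (1-t) powr (\<nu>-1)
          = g0 t * (1-t+t^2) * (t*(1-t)) powr (-(a+1))"
    proof -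
      have "g0 t * (1-t+t^2) * (t*(1-t)) powr (-(a+1)) = (g0 t * (t*(1-t)) powr (-(a+1))) * (1-t+t^2)"
        by (simp add: mult_ac)
      also have "\<dots> = t powr (\<mu>-1-1) * (1-t) powr (\<nu>-1-1) * (1-t+t^2)" by (simp only: e)
      finally show ?thesis unfolding e1 e2 by (simp add: power2_eq_square algebra_simps)
    qed
  qed (use a in auto)
  then have "(\<lambda>n. a / B * (pochhammer (a+1) n / fact n * integral {0..1}
      (\<lambda>t. (g0 t * (1-t+t^2)) * (1-t+t^2)^n))) sums (a / B * (Beta (\<mu>-1) (\<nu>-1) - Beta \<mu> \<nu>))"
    by (rule sums_mult)
  moreover have "a / B * (Beta (\<mu>-1) (\<nu>-1) - Beta \<mu> \<nu>) = a * (Beta (\<nu> - 1) (\<mu> - 1) / B - 1)"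
    using B by (simp add: B_def Beta_commute field_simps)
  moreover have "a / B * (pochhammer (a+1) n / fact n * integral {0..1}
      (\<lambda>t. (g0 t * (1-t+t^2)) * (1-t+t^2)^n)) = real (Suc n) * coef d \<nu> \<mu> (Suc n)" for n
  proof -
    have i: "integral {0..1} (\<lambda>t. (g0 t * (1-t+t^2)) * (1-t+t^2)^n)
           = integral {0..1} (\<lambda>t. g0 t * (1-t+t^2)^Suc n)"
      by (simp add: mult_ac)
    have gen: "a / B * (pochhammer (a+1) n / fact n * J) =
        real (Suc n) * (1 / B * (pochhammer a (Suc n) / fact (Suc n)) * J)" for J
    proof -
      have f: "(fact n :: real) > 0" by simp
      have "real (Suc n) > 0" by simp
      then have "real (Suc n) * (1 / B * (a * pochhammer (a+1) n / (real (Suc n) * fact n)) * J)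
          = a / B * (pochhammer (a+1) n / fact n * J)"
        using B f by (simp add: divide_simps del: of_nat_Suc)
      then show ?thesis by (simp only: pochhammer_rec fact_Suc of_nat_mult)
    qed
    show ?thesis unfolding coef_def g0_def a_def[symmetric] B_def[symmetric] gen
      by (rule arg_cong[where f="\<lambda>J. real (Suc n) * (1 / B * (pochhammer a (Suc n) / fact (Suc n)) * J)"],
          rule integral_cong, simp add: mult_ac)
  qed
  ultimately have "(\<lambda>n. real (Suc n) * coef d \<nu> \<mu> (Suc n)) sums (a * (Beta (\<nu> - 1) (\<mu> - 1) / B - 1))"
    by simp
  then have "(\<lambda>n. real n * coef d \<nu> \<mu> n) sums (a * (Beta (\<nu> - 1) (\<mu> - 1) / B - 1) + real 0 * coef d \<nu> \<mu> 0)"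
    using sums_Suc_iff[of "\<lambda>n. real n * coef d \<nu> \<mu> n" "a * (Beta (\<nu> - 1) (\<mu> - 1) / B - 1)"] by blast
  then show ?thesis by (simp add: a_def B_def)
qed

lemma part3:
  fixes d :: nat and \<nu> \<mu> :: real
  assumes "d \<ge> 1" "\<nu> > 2" and "\<mu> > 2"
  shows "(\<lambda>n. real n * (real n - 1) * coef d \<nu> \<mu> n) sums
     (real d / 2 * (real d / 2 + 1) * (Beta (\<nu> - 2) (\<mu> - 2) / Beta \<nu> \<mu>
        - 2 * (Beta (\<nu> - 1) (\<mu> - 1) / Beta \<nu> \<mu>) + 1))"
proof -
  define a where "a = real d / 2"
  have a: "a > 0" using assms(1) by (simp add: a_def)
  define B where "B = Beta \<nu> \<mu>"
  have B: "B > 0" unfolding B_def using assms by (intro Beta_pos_real) auto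
  define g0 where "g0 t = t powr (\<mu>+a-1) * (1-t) powr (\<nu>+a-1)" for t :: real
  have "(\<lambda>n. pochhammer (a+1+1) n / fact n * integral {0..1}
      (\<lambda>t. (g0 t * (1-t+t^2)^2) * (1-t+t^2)^n)) sums
      (Beta (\<mu>-2) (\<nu>-2) - 2 * Beta (\<mu>-1) (\<nu>-1) + Beta \<mu> \<nu>)"
  proof (rule series_integral[where G = "\<lambda>t. t powr (\<mu>-2-1) * (1-t) powr (\<nu>-2-1)
       - 2 * (t powr (\<mu>-1-1) * (1-t) powr (\<nu>-1-1)) + t powr (\<mu>-1) * (1-t) powr (\<nu>-1)"])
    show "((\<lambda>t. t powr (\<mu>-2-1) * (1-t) powr (\<nu>-2-1)
       - 2 * (t powr (\<mu>-1-1) * (1-t) powr (\<nu>-1-1)) + t powr (\<mu>-1) * (1-t) powr (\<nu>-1))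
            has_integral (Beta (\<mu>-2) (\<nu>-2) - 2 * Beta (\<mu>-1) (\<nu>-1) + Beta \<mu> \<nu>)) {0..1}"
      using assms by (intro has_integral_diff has_integral_add has_integral_mult_right has_integral_Beta_real) auto
    show "continuous_on {0<..<1} (\<lambda>t::real. g0 t * (1-t+t^2)^2)"
      unfolding g0_def by (intro continuous_intros cont_g0)
    fix t :: real assume t: "t \<in> {0<..<1}"
    then show "0 \<le> g0 t * (1-t+t^2)^2" using t by (simp add: g0_def)
    have e: "g0 t * (t*(1-t)) powr (-(a+1+1)) = t powr (\<mu>-2-1) * (1-t) powr (\<nu>-2-1)"
      unfolding g0_def using t by (subst powr_shift) auto
    have e1: "t powr (\<mu>-1-1) = t powr (\<mu>-2-1) * t" using t by (intro powr_plus1) auto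
    have e2: "(1-t) powr (\<nu>-1-1) = (1-t) powr (\<nu>-2-1) * (1-t)" using t by (intro powr_plus1) auto
    have e3: "t powr (\<mu>-1) = t powr (\<mu>-2-1) * t^2" using t by (intro powr_plus2) auto
    have e4: "(1-t) powr (\<nu>-1) = (1-t) powr (\<nu>-2-1) * (1-t)^2" using t by (intro powr_plus2) auto
    show "t powr (\<mu>-2-1) * (1-t) powr (\<nu>-2-1)
       - 2 * (t powr (\<mu>-1-1) * (1-t) powr (\<nu>-1-1)) + t powr (\<mu>-1) * (1-t) powr (\<nu>-1)
          = g0 t * (1-t+t^2)^2 * (t*(1-t)) powr (-(a+1+1))"
    proof -
      have "g0 t * (1-t+t^2)^2 * (t*(1-t)) powr (-(a+1+1)) = (g0 t * (t*(1-t)) powr (-(a+1+1))) * (1-t+t^2)^2"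
        by (simp add: mult_ac)
      also have "\<dots> = t powr (\<mu>-2-1) * (1-t) powr (\<nu>-2-1) * (1-t+t^2)^2" by (simp only: e)
      finally show ?thesis unfolding e1 e2 e3 e4 by (simp add: power2_eq_square algebra_simps)
    qed
  qed (use a in auto)
  then have "(\<lambda>n. a * (a+1) / B * (pochhammer (a+1+1) n / fact n * integral {0..1}
      (\<lambda>t. (g0 t * (1-t+t^2)^2) * (1-t+t^2)^n))) sums
      (a * (a+1) / B * (Beta (\<mu>-2) (\<nu>-2) - 2 * Beta (\<mu>-1) (\<nu>-1) + Beta \<mu> \<nu>))"
    by (rule sums_mult)
  moreover have "a * (a+1) / B * (Beta (\<mu>-2) (\<nu>-2) - 2 * Beta (\<mu>-1) (\<nu>-1) + Beta \<mu> \<nu>)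
     = a * (a+1) * (Beta (\<nu> - 2) (\<mu> - 2) / B - 2 * (Beta (\<nu> - 1) (\<mu> - 1) / B) + 1)"
    using B by (simp add: B_def Beta_commute field_simps)
  moreover have "a * (a+1) / B * (pochhammer (a+1+1) n / fact n * integral {0..1}
      (\<lambda>t. (g0 t * (1-t+t^2)^2) * (1-t+t^2)^n))
      = real (Suc (Suc n)) * (real (Suc (Suc n)) - 1) * coef d \<nu> \<mu> (Suc (Suc n))" for n
  proof -
    have gen: "a * (a+1) / B * (pochhammer (a+1+1) n / fact n * J) =
        real (Suc (Suc n)) * (real (Suc (Suc n)) - 1) * (1 / B * (pochhammer a (Suc (Suc n)) / fact (Suc (Suc n))) * J)" for J
    proof -
      have f: "(fact n :: real) > 0" by simp
      have "real (Suc n) > 0" "real (Suc (Suc n)) > 0" by simp_all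
      then have "real (Suc (Suc n)) * real (Suc n) * (1 / B * (a * ((a + 1) * pochhammer (a+1+1) n) / (real (Suc (Suc n)) * (real (Suc n) * fact n))) * J)
          = a * (a+1) / B * (pochhammer (a+1+1) n / fact n * J)"
        using B f by (simp add: divide_simps del: of_nat_Suc)
      moreover have "real (Suc (Suc n)) - 1 = real (Suc n)" by simp
      ultimately show ?thesis by (simp only: pochhammer_rec fact_Suc of_nat_mult)
    qed
    show ?thesis unfolding coef_def g0_def a_def[symmetric] B_def[symmetric] gen
      by (rule arg_cong[where f="\<lambda>J. real (Suc (Suc n)) * (real (Suc (Suc n)) - 1) * (1 / B * (pochhammer a (Suc (Suc n)) / fact (Suc (Suc n))) * J)"],
          rule integral_cong, simp add: mult_ac power2_eq_square)
  qed
  ultimately have S: "(\<lambda>n. real (Suc (Suc n)) * (real (Suc (Suc n)) - 1) * coef d \<nu> \<mu> (Suc (Suc n))) sums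
     (a * (a+1) * (Beta (\<nu> - 2) (\<mu> - 2) / B - 2 * (Beta (\<nu> - 1) (\<mu> - 1) / B) + 1))"
    (is "_ sums ?s") by simp
  define h where "h n = real n * (real n - 1) * coef d \<nu> \<mu> n" for n
  have "(\<lambda>n. h (Suc (Suc n))) sums ?s" using S by (simp only: h_def)
  then have "(\<lambda>n. h (Suc n)) sums (?s + h (Suc 0))"
    using sums_Suc_iff[of "\<lambda>n. h (Suc n)" ?s] by blast
  then have "h sums (?s + h (Suc 0) + h 0)"
    using sums_Suc_iff[of h "?s + h (Suc 0)"] by blast
  moreover have "h (Suc 0) = 0" "h 0 = 0" by (simp_all add: h_def)
  ultimately have "h sums ?s" by simp
  then show ?thesis unfolding h_def[abs_def] by (simp add: a_def B_def)
qed

lemma var_alg: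
  fixes d r1 r2 :: real
  shows "d / 2 * (d / 2 + 1) * (r2 - 2 * r1 + 1) + (1 - 2 * (d / 2 * (r1 - 1))) * (d / 2 * (r1 - 1))
     + (d / 2 * (r1 - 1))^2 * 1 = d / 4 * ((d + 2) * r2 - 2 * r1 - d * r1^2)"
  by (simp add: power2_eq_square field_simps)

theorem theorem8:
  fixes d :: nat and \<nu> \<mu> :: real
  assumes "d \<ge> 1" and "\<nu> > 0" and "\<mu> > 0"
  shows "coef d \<nu> \<mu> sums 1 \<and>
         (\<nu> > 1 \<and> \<mu> > 1 \<longrightarrow>
           (\<lambda>n. real n * coef d \<nu> \<mu> n) sums
             (real d / 2 * (Beta (\<nu> - 1) (\<mu> - 1) / Beta \<nu> \<mu> - 1))) \<and>
         (\<nu> > 2 \<and> \<mu> > 2 \<longrightarrow>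
           (\<lambda>n. (real n - real d / 2 * (Beta (\<nu> - 1) (\<mu> - 1) / Beta \<nu> \<mu> - 1))\<^sup>2
                 * coef d \<nu> \<mu> n) sums
             (real d / 4 * ((real d + 2) * (Beta (\<nu> - 2) (\<mu> - 2) / Beta \<nu> \<mu>)
                 - 2 * (Beta (\<nu> - 1) (\<mu> - 1) / Beta \<nu> \<mu>)
                 - real d * ((Beta (\<nu> - 1) (\<mu> - 1))\<^sup>2 / (Beta \<nu> \<mu>)\<^sup>2))))"
proof (intro conjI impI)
  show "coef d \<nu> \<mu> sums 1" using part1 assms by blast
  show "(\<lambda>n. real n * coef d \<nu> \<mu> n) sums
             (real d / 2 * (Beta (\<nu> - 1) (\<mu> - 1) / Beta \<nu> \<mu> - 1))" if "\<nu> > 1 \<and> \<mu> > 1"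
    using part2 assms that by blast
  assume h: "\<nu> > 2 \<and> \<mu> > 2"
  define m where "m = real d / 2 * (Beta (\<nu> - 1) (\<mu> - 1) / Beta \<nu> \<mu> - 1)"
  define r1 where "r1 = Beta (\<nu> - 1) (\<mu> - 1) / Beta \<nu> \<mu>"
  define r2 where "r2 = Beta (\<nu> - 2) (\<mu> - 2) / Beta \<nu> \<mu>"
  have S0: "coef d \<nu> \<mu> sums 1" using part1 assms by blast
  have S1: "(\<lambda>n. real n * coef d \<nu> \<mu> n) sums m"
    unfolding m_def using part2 assms h by simp
  have S2: "(\<lambda>n. real n * (real n - 1) * coef d \<nu> \<mu> n) sums
     (real d / 2 * (real d / 2 + 1) * (r2 - 2 * r1 + 1))"
    unfolding r1_def r2_def using part3 assms h by simp
  have A: "(\<lambda>n. real n * (real n - 1) * coef d \<nu> \<mu> n + (1 - 2*m) * (real n * coef d \<nu> \<mu> n)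
          + m^2 * coef d \<nu> \<mu> n) sums
        (real d / 2 * (real d / 2 + 1) * (r2 - 2 * r1 + 1) + (1 - 2*m) * m + m^2 * 1)"
    by (intro sums_add sums_mult S0 S1 S2)
  have B0: "real n * (real n - 1) * coef d \<nu> \<mu> n + (1 - 2*m) * (real n * coef d \<nu> \<mu> n)
          + m^2 * coef d \<nu> \<mu> n = (real n - m)^2 * coef d \<nu> \<mu> n" for n
    by (simp add: power2_eq_square algebra_simps)
  have C: "real d / 2 * (real d / 2 + 1) * (r2 - 2 * r1 + 1) + (1 - 2*m) * m + m^2 * 1
     = real d / 4 * ((real d + 2) * r2 - 2 * r1 - real d * r1^2)"
    unfolding m_def r1_def[symmetric] by (rule var_alg)
  have D: "real d / 4 * ((real d + 2) * r2 - 2 * r1 - real d * r1^2) =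
    real d / 4 * ((real d + 2) * (Beta (\<nu> - 2) (\<mu> - 2) / Beta \<nu> \<mu>)
                 - 2 * (Beta (\<nu> - 1) (\<mu> - 1) / Beta \<nu> \<mu>)
                 - real d * ((Beta (\<nu> - 1) (\<mu> - 1))\<^sup>2 / (Beta \<nu> \<mu>)\<^sup>2))"
    by (simp add: r1_def r2_def power_divide)
  have B: "(\<lambda>n. real n * (real n - 1) * coef d \<nu> \<mu> n + (1 - 2*m) * (real n * coef d \<nu> \<mu> n)
          + m^2 * coef d \<nu> \<mu> n) = (\<lambda>n. (real n - m)^2 * coef d \<nu> \<mu> n)"
    using B0 by (rule ext)
  show "(\<lambda>n. (real n - real d / 2 * (Beta (\<nu> - 1) (\<mu> - 1) / Beta \<nu> \<mu> - 1))\<^sup>2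
                 * coef d \<nu> \<mu> n) sums
             (real d / 4 * ((real d + 2) * (Beta (\<nu> - 2) (\<mu> - 2) / Beta \<nu> \<mu>)
                 - 2 * (Beta (\<nu> - 1) (\<mu> - 1) / Beta \<nu> \<mu>)
                 - real d * ((Beta (\<nu> - 1) (\<mu> - 1))\<^sup>2 / (Beta \<nu> \<mu>)\<^sup>2)))"
    unfolding m_def[symmetric] using A unfolding B C D .
qed

end
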